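(* Let $(L,\sqsubseteq)$ be a countably complete lattice, $F:L\to L$ monotone and countably continuous, and $a\in L^\omega$ with $a_n\sqsubseteq a_{n+1}$ for all $n$. Define $c_m=\inf_{n\ge m}\sup_{k\ge n}F^k(a_k)$. Then $F(c_m)\sqsubseteq c_m$ for all $m\in\omega$.
   Context: A countably complete lattice is a lattice in which every countable subset (including $\emptyset$) has a supremum and an infimum. $F$ is countably continuous if $F(\sup S)=\sup F(S)$ for every nonempty countable $S\subseteq L$. $F^k$ is the $k$-fold iterate. *)

theory Defs
  imports "HOL-Library.Countable_Complete_Lattices"
begin

definition countably_continuous :: "('a::countable_complete_lattice \<Rightarrow> 'a) \<Rightarrow> bool" where
  "countably_continuous F \<longleftrightarrow>
     (\<forall>S. countable S \<and> S \<noteq> {} \<longrightarrow> F (Sup S) = Sup (F ` S))"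

end

theory Submission
  imports Defs
begin

theorem mainTheorem8:
  fixes F :: "'a::countable_complete_lattice \<Rightarrow> 'a"
    and a :: "nat \<Rightarrow> 'a"
    and c :: "nat \<Rightarrow> 'a"
  assumes "mono F"
    and "countably_continuous F"
    and "\<And>n. a n \<le> a (Suc n)"
    and "\<And>m. c m = (INF n\<in>{m..}. SUP k\<in>{n..}. (F ^^ k) (a k))"
  shows "\<forall>m. F (c m) \<le> c m"
proof
  fix m
  define s where "s n = (SUP k\<in>{n..}. (F ^^ k) (a k))" for n
  have cm: "c m = (INF n\<in>{m..}. s n)" using assms(4) s_def by simp
  have mk: "mono (F ^^ k)" for k using assms(1)
    by (induction k) (auto simp: mono_def)
  have Fs: "F (s n) \<le> s n" for n
  proof -
    have "F (s n) = (SUP x\<in>((\<lambda>k. (F ^^ k) (a k)) ` {n..}). F x)"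
    proof -
      let ?S = "(\<lambda>k. (F ^^ k) (a k)) ` {n..}"
      have "countable ?S" "?S \<noteq> {}" by auto
      then have "F (Sup ?S) = Sup (F ` ?S)"
        using assms(2) unfolding countably_continuous_def by blast
      then show ?thesis unfolding s_def by (simp add: image_image)
    qed
    also have "\<dots> = (SUP k\<in>{n..}. F ((F ^^ k) (a k)))" by (simp add: image_image)
    also have "\<dots> \<le> s n" unfolding s_def
    proof (rule ccSUP_least)
      show "countable {n..}" by simp
      fix k assume k: "k \<in> {n..}"
      have "F ((F ^^ k) (a k)) = (F ^^ Suc k) (a k)" by simp
      also have "\<dots> \<le> (F ^^ Suc k) (a (Suc k))" by (rule monoD[OF mk assms(3)])
      also have "\<dots> \<le> (SUP k\<in>{n..}. (F ^^ k) (a k))"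
        by (rule ccSUP_upper) (use k in auto)
      finally show "F ((F ^^ k) (a k)) \<le> (SUP k\<in>{n..}. (F ^^ k) (a k))" .
    qed
    finally show ?thesis .
  qed
  show "F (c m) \<le> c m" unfolding cm
  proof (rule ccINF_greatest)
    show "countable {m..}" by simp
    fix n assume n: "n \<in> {m..}"
    have "F (INF n\<in>{m..}. s n) \<le> F (s n)"
      by (rule monoD[OF assms(1)], rule ccINF_lower) (use n in auto)
    also have "\<dots> \<le> s n" by (rule Fs)
    finally show "F (INF n\<in>{m..}. s n) \<le> s n" .
  qed
qed

end
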